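(* Let $m\geq 1$ be an integer and $\omega\in[-1,1]$. The function $$W_{m,\omega}(x)=m-1-\frac{m}{1-x}+\frac{1-\omega x}{(1-x)^{m+1}(1-2\omega x+x^2)}$$ is absolutely monotonic on $(0,1)$, i.e. it has derivatives of all orders there and $W_{m,\omega}^{(n)}(x)\geq 0$ for all $n=0,1,2,\dots$ and all $x\in(0,1)$. *)

theory Defs
  imports "HOL-Analysis.Analysis"
begin

definition absolutely_monotonic_on :: "real set \<Rightarrow> (real \<Rightarrow> real) \<Rightarrow> bool" where
  "absolutely_monotonic_on S f \<longleftrightarrow>
     (\<exists>D :: nat \<Rightarrow> real \<Rightarrow> real.
        (\<forall>x\<in>S. D 0 x = f x) \<and>
        (\<forall>n. \<forall>x\<in>S. (D n has_real_derivative D (Suc n) x) (at x)) \<and>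
        (\<forall>n. \<forall>x\<in>S. D n x \<ge> 0))"

definition W :: "nat \<Rightarrow> real \<Rightarrow> real \<Rightarrow> real" where
  "W m \<omega> x = real m - 1 - real m / (1 - x)
     + (1 - \<omega> * x) / ((1 - x) ^ (m + 1) * (1 - 2 * \<omega> * x + x ^ 2))"

end

theory Submission
  imports Defs
begin

fun P :: "real \<Rightarrow> nat \<Rightarrow> nat \<Rightarrow> real" where
  "P t 0 n = cos (real n * t)"
| "P t (Suc j) n = (\<Sum>k\<le>n. P t j k)"

lemma P_zero: "P t j 0 = 1"
  by (induction j) auto

lemma reflect: "(\<Sum>k\<le>n. cos (real (Suc n - k) * t)) = (\<Sum>k\<le>n. cos (real (Suc k) * t))"
  by (rule sum.reindex_bij_witness[where i="\<lambda>k. n - k" and j="\<lambda>k. n - k"]) (auto simp: Suc_diff_le)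

lemma fejer_id:
  "(\<Sum>k\<le>n. cos (real k * t))^2 + (\<Sum>k\<le>n. sin (real k * t))^2
     = 2 * P t 2 n - (real n + 1)"
proof (induction n)
  case 0
  then show ?case by (simp add: numeral_2_eq_2)
next
  case (Suc n)
  define A where "A = (\<Sum>k\<le>n. cos (real k * t))"
  define B where "B = (\<Sum>k\<le>n. sin (real k * t))"
  define s where "s = real (Suc n) * t"
  have cross: "A * cos s + B * sin s = (\<Sum>k\<le>n. cos (real (Suc k) * t))"
  proof -
    have "A * cos s + B * sin s = (\<Sum>k\<le>n. cos (real k * t) * cos s + sin (real k * t) * sin s)"
      by (simp only: A_def B_def sum_distrib_right sum.distrib)
    also have "\<dots> = (\<Sum>k\<le>n. cos (s - real k * t))"
      by (rule sum.cong) (auto simp: cos_diff)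
    also have "\<dots> = (\<Sum>k\<le>n. cos (real (Suc n - k) * t))"
      by (rule sum.cong) (auto simp: s_def of_nat_diff left_diff_distrib)
    finally show ?thesis using reflect by simp
  qed
  have A1: "(\<Sum>k\<le>Suc n. cos (real k * t)) = 1 + (\<Sum>k\<le>n. cos (real (Suc k) * t))"
    by (subst sum.atMost_Suc_shift) simp
  have "(\<Sum>k\<le>Suc n. cos (real k * t))^2 + (\<Sum>k\<le>Suc n. sin (real k * t))^2
     = (A + cos s)^2 + (B + sin s)^2"
    by (simp add: A_def B_def s_def)
  also have "\<dots> = A^2 + B^2 + 2 * (A * cos s + B * sin s) + 1"
    by (simp add: power2_eq_square algebra_simps)
  also have "\<dots> = 2 * P t 2 n - (real n + 1) + 2 * ((\<Sum>k\<le>Suc n. cos (real k * t)) - 1) + 1"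
    using Suc.IH cross A1 by (simp add: A_def B_def)
  also have "\<dots> = 2 * P t 2 (Suc n) - (real (Suc n) + 1)"
    by (simp add: numeral_2_eq_2)
  finally show ?case .
qed

lemma P2_ge: "P t 2 n \<ge> (real n + 1) / 2"
proof -
  have "0 \<le> (\<Sum>k\<le>n. cos (real k * t))^2 + (\<Sum>k\<le>n. sin (real k * t))^2" by simp
  moreover have "\<And>a b c::real. 0 \<le> a \<Longrightarrow> a = 2*b - c \<Longrightarrow> c/2 \<le> b" by linarith
  ultimately show ?thesis using fejer_id[where n=n and t=t] by blast
qed

lemma P_ge: "j \<ge> 1 \<Longrightarrow> n \<ge> 1 \<Longrightarrow> P t (Suc j) n \<ge> real j"
proof (induction j arbitrary: n rule: dec_induct)
  case base
  then show ?case using P2_ge[where n=n and t=t] by (simp add: numeral_2_eq_2)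
next
  case (step j)
  obtain n' where n: "n = Suc n'" using step.prems by (cases n) auto
  have "P t (Suc (Suc j)) n = P t (Suc j) 0 + (\<Sum>k\<le>n'. P t (Suc j) (Suc k))"
    by (simp only: P.simps(2)[of t "Suc j"] n sum.atMost_Suc_shift)
  also have "(\<Sum>k\<le>n'. P t (Suc j) (Suc k)) \<ge> (\<Sum>k\<le>n'. real j)"
    by (rule sum_mono) (rule step.IH, simp)
  moreover have "(\<Sum>k\<le>n'. real j) = (real n' + 1) * real j" by simp
  ultimately have "P t (Suc (Suc j)) n \<ge> 1 + (real n' + 1) * real j"
    using P_zero[of t "Suc j"] by linarith
  moreover have "(real n' + 1) * real j \<ge> real j" using step.hyps by simp
  ultimately show ?case by simp
qed

lemma P_sums:
  assumes x: "\<bar>x\<bar> < 1"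
  shows "summable (\<lambda>n. \<bar>P t j n * x^n\<bar>) \<and>
         (\<lambda>n. P t j n * x^n) sums ((\<Sum>n. cos (real n * t) * x^n) / (1 - x)^j)"
proof (induction j)
  case 0
  have g: "summable (\<lambda>n. \<bar>x\<bar>^n)" using x by (simp add: summable_geometric)
  have "summable (\<lambda>n. \<bar>cos (real n * t) * x^n\<bar>)"
  proof (rule summable_comparison_test[OF _ g], intro exI[of _ 0] allI impI)
    fix n :: nat
    have "\<bar>cos (real n * t)\<bar> * \<bar>x\<bar>^n \<le> 1 * \<bar>x\<bar>^n"
      by (rule mult_right_mono) auto
    then show "norm \<bar>cos (real n * t) * x^n\<bar> \<le> \<bar>x\<bar>^n"
      by (simp add: abs_mult power_abs)
  qed
  then have "summable (\<lambda>n. cos (real n * t) * x^n)"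
    using summable_norm_cancel[of "\<lambda>n. cos (real n * t) * x^n"] by (simp add: real_norm_def)
  with \<open>summable (\<lambda>n. \<bar>cos (real n * t) * x^n\<bar>)\<close> show ?case
    by (simp add: summable_sums)
next
  case (Suc j)
  define a where "a i = P t j i * x^i" for i
  define b where "b i = (x::real)^i" for i
  have sa: "summable (\<lambda>k. norm (a k))" using Suc.IH by (simp add: a_def real_norm_def)
  have sb: "summable (\<lambda>k. norm (b k))" using x by (simp add: b_def real_norm_def power_abs summable_geometric)
  have trm: "(\<Sum>i\<le>k. a i * b (k - i)) = P t (Suc j) k * x^k" for k
  proof -
    have "(\<Sum>i\<le>k. a i * b (k - i)) = (\<Sum>i\<le>k. P t j i * x^k)"
      by (rule sum.cong) (auto simp: a_def b_def mult.assoc power_add[symmetric])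
    then show ?thesis by (simp add: sum_distrib_right)
  qed
  have "(\<lambda>k. \<Sum>i\<le>k. a i * b (k - i)) sums ((\<Sum>k. a k) * (\<Sum>k. b k))"
    by (rule Cauchy_product_sums[OF sa sb])
  moreover have "(\<Sum>k. a k) = (\<Sum>n. cos (real n * t) * x^n) / (1 - x)^j"
    using Suc.IH by (simp add: a_def sums_iff)
  moreover have "(\<Sum>k. b k) = 1 / (1 - x)"
    using geometric_sums[of x] x by (simp add: b_def sums_iff)
  ultimately have S: "(\<lambda>k. P t (Suc j) k * x^k) sums ((\<Sum>n. cos (real n * t) * x^n) / (1 - x)^Suc j)"
    by (simp add: trm ac_simps)
  have sab: "summable (\<lambda>k. \<Sum>i\<le>k. norm (a i) * norm (b (k - i)))"
    using summable_Cauchy_product[of "\<lambda>i. norm (a i)" "\<lambda>i. norm (b i)"] sa sb by simp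
  have "summable (\<lambda>k. \<bar>P t (Suc j) k * x^k\<bar>)"
  proof (rule summable_comparison_test[OF _ sab], intro exI allI impI)
    fix k
    show "norm \<bar>P t (Suc j) k * x^k\<bar> \<le> (\<Sum>i\<le>k. norm (a i) * norm (b (k - i)))"
      unfolding trm[symmetric] using sum_abs[of "\<lambda>i. a i * b (k - i)" "{..k}"]
      by (simp add: abs_mult)
  qed
  with S show ?case by simp
qed

lemma cheb_sum:
  assumes x: "\<bar>x\<bar> < 1"
  shows "(1 - 2 * cos t * x + x^2) * (\<Sum>n. cos (real n * t) * x^n) = 1 - cos t * x"
proof -
  define f where "f n = cos (real n * t) * x^n" for n
  define g where "g = (\<Sum>n. f n)"
  have fs: "f sums g"
    unfolding g_def f_def[abs_def] using P_sums[OF x, of t 0] by (simp add: sums_iff)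
  have f1: "(\<lambda>n. f (Suc n)) sums (g - 1)"
    using fs by (subst sums_Suc_iff) (simp add: f_def)
  have f2: "(\<lambda>n. f (Suc (Suc n))) sums (g - 1 - cos t * x)"
    using f1 by (subst sums_Suc_iff) (simp add: f_def)
  have rec: "f (Suc (Suc n)) = 2 * cos t * x * f (Suc n) - x^2 * f n" for n
  proof -
    have C: "cos (real (Suc (Suc n)) * t) = 2 * cos t * cos (real (Suc n) * t) - cos (real n * t)"
      using cos_add[of "real (Suc n) * t" t] cos_diff[of "real (Suc n) * t" t]
      by (simp add: algebra_simps)
    have "f (Suc (Suc n)) = (2 * cos t * cos (real (Suc n) * t) - cos (real n * t)) * (x * (x * x^n))"
      unfolding f_def C by simp
    also have "\<dots> = 2 * cos t * x * f (Suc n) - x^2 * f n"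
      unfolding f_def by (simp add: power2_eq_square algebra_simps)
    finally show ?thesis .
  qed
  have "(\<lambda>n. 2 * cos t * x * f (Suc n) - x^2 * f n) sums (2 * cos t * x * (g - 1) - x^2 * g)"
    by (intro sums_diff sums_mult f1 fs)
  then have "g - 1 - cos t * x = 2 * cos t * x * (g - 1) - x^2 * g"
    using f2 rec sums_unique2 by (metis (no_types, lifting) ext)
  moreover have gg: "(\<Sum>n. cos (real n * t) * x^n) = g" by (simp add: g_def f_def)
  ultimately show ?thesis by (simp add: algebra_simps)
qed

lemma diffs_nonneg: "(\<forall>k. c k \<ge> (0::real)) \<Longrightarrow> ((diffs ^^ n) c) k \<ge> 0"
  by (induction n arbitrary: k) (auto simp: diffs_def)

lemma diffs_summable:
  assumes "\<And>y. \<bar>y\<bar> < 1 \<Longrightarrow> summable (\<lambda>k. c k * y^k)"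
  shows "\<bar>y\<bar> < 1 \<Longrightarrow> summable (\<lambda>k. ((diffs ^^ n) c) k * (y::real)^k)"
proof (induction n arbitrary: y)
  case 0
  then show ?case using assms by simp
next
  case (Suc n)
  show ?case using termdiff_converges[of y 1 "(diffs ^^ n) c"] Suc by simp
qed

theorem theorem6:
  fixes m :: nat and \<omega> :: real
  assumes "m \<ge> 1" and "-1 \<le> \<omega>" and "\<omega> \<le> 1"
  shows "absolutely_monotonic_on {0<..<1} (W m \<omega>)"
proof -
  define t where "t = arccos \<omega>"
  have ct: "cos t = \<omega>" using assms by (simp add: t_def cos_arccos)
  define a where "a n = P t (m+1) n - real m + (if n = 0 then real m - 1 else 0)" for n
  have a_nonneg: "a n \<ge> 0" for n
  proof (cases "n = 0")
    case True then show ?thesis by (simp add: a_def P_zero)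
  next
    case False
    then have "P t (Suc m) n \<ge> real m" using P_ge[where j=m and n=n and t=t] assms by simp
    then show ?thesis using False by (simp add: a_def)
  qed
  have a_sums: "(\<lambda>n. a n * x^n) sums
      ((\<Sum>n. cos (real n * t) * x^n) / (1 - x)^(m+1) - real m / (1 - x) + (real m - 1))"
    if x: "\<bar>x\<bar> < 1" for x
  proof -
    have s1: "(\<lambda>n. P t (m+1) n * x^n) sums ((\<Sum>n. cos (real n * t) * x^n) / (1 - x)^(m+1))"
      using P_sums[OF x] by blast
    have s2: "(\<lambda>n. real m * x^n) sums (real m * (1 / (1 - x)))"
      by (intro sums_mult geometric_sums) (simp add: x)
    have s3: "(\<lambda>n. if n = 0 then real m - 1 else 0) sums (real m - 1)"
      using sums_single[of 0 "\<lambda>_. real m - 1"] by simp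
    have "(\<lambda>n. P t (m+1) n * x^n - real m * x^n + (if n = 0 then real m - 1 else 0)) sums
        ((\<Sum>n. cos (real n * t) * x^n) / (1 - x)^(m+1) - real m * (1 / (1 - x)) + (real m - 1))"
      by (intro sums_add sums_diff s1 s2 s3)
    moreover have "(\<lambda>n. P t (m+1) n * x^n - real m * x^n + (if n = 0 then real m - 1 else 0))
        = (\<lambda>n. a n * x^n)"
      by (auto simp: a_def algebra_simps)
    ultimately show ?thesis by simp
  qed
  have a_summ: "summable (\<lambda>n. a n * y^n)" if "\<bar>y\<bar> < 1" for y
    using a_sums[OF that] sums_summable by blast
  define D where "D n x = (\<Sum>k. ((diffs ^^ n) a) k * x^k)" for n x
  show ?thesis unfolding absolutely_monotonic_on_def
  proof (intro exI[of _ D] conjI ballI allI)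
    fix x :: real assume "x \<in> {0<..<1}"
    then have x0: "0 < x" and x1: "x < 1" by auto
    have xa: "\<bar>x\<bar> < 1" using x0 x1 by simp
    have den: "1 - 2 * \<omega> * x + x^2 > 0"
    proof -
      have "1 - 2 * \<omega> * x + x^2 \<ge> (1 - x)^2"
        using assms x0 by (simp add: power2_eq_square algebra_simps)
      moreover have "(1 - x)^2 > 0" using x1 by simp
      ultimately show ?thesis by linarith
    qed
    have G: "(\<Sum>n. cos (real n * t) * x^n) = (1 - \<omega> * x) / (1 - 2 * \<omega> * x + x^2)"
      using cheb_sum[OF xa, of t] den ct by (simp add: field_simps)
    have "D 0 x = (\<Sum>n. cos (real n * t) * x^n) / (1 - x)^(m+1) - real m / (1 - x) + (real m - 1)"
      using sums_unique[OF a_sums[OF xa]] by (simp add: D_def)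
    then show "D 0 x = W m \<omega> x"
      unfolding W_def G by (simp add: mult_ac)
  next
    fix n and x :: real assume "x \<in> {0<..<1}"
    then have x0: "0 < x" and x1: "x < 1" by auto
    define K where "K = (1 + x) / 2"
    have "summable (\<lambda>k. ((diffs ^^ n) a) k * K^k)"
      using diffs_summable[of a K n] a_summ x0 x1 by (simp add: K_def)
    moreover have "norm x < norm K" using x0 x1 by (simp add: K_def)
    ultimately have "DERIV (\<lambda>x. \<Sum>k. ((diffs ^^ n) a) k * x^k) x :> (\<Sum>k. diffs ((diffs ^^ n) a) k * x^k)"
      by (rule termdiffs_strong)
    then show "(D n has_real_derivative D (Suc n) x) (at x)"
      by (simp add: D_def[abs_def])
  next
    fix n and x :: real assume "x \<in> {0<..<1}"
    then have x0: "0 < x" and x1: "x < 1" by auto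
    show "D n x \<ge> 0" unfolding D_def
      by (rule suminf_nonneg) (auto intro!: diffs_summable a_summ mult_nonneg_nonneg diffs_nonneg a_nonneg simp: x0 x1 less_imp_le)
  qed
qed

end
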